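(* For every $n\geq1$ and every divisor $d$ of $2n$, $$\mathrm{orb}_d(n)=\begin{cases}\mathrm{orb}_1(n/d), & d \text{ odd},\\ \mathrm{orb}_2(2n/d), & d\text{ even}.\end{cases}$$
   Context: For an integer $n\geq1$ let $V_n=\{v_0,\dots,v_{n-1}\}$, indices modulo $n$. The dihedral group $D_{2n}=\{1,\sigma,\dots,\sigma^{n-1},\tau,\sigma\tau,\dots,\sigma^{n-1}\tau\}$ acts on subsets of $V_n$ elementwise, with $\sigma(v_i)=v_{i+1}$, $\tau(v_i)=v_{n-i}$. Let $\mathbf{X}_n$ be the family of subsets $X\subseteq V_n$ such that (a) there is no $i\in\mathbb{Z}_n$ with $v_i,v_{i+1}\in X$, and (b) for every $i\in\mathbb{Z}_n$ at least one of $v_i,v_{i+1},v_{i+2}$ lies in $X$ (for $n\geq3$ these are exactly the maximal independent sets of the cycle graph $C_n$ with edges $v_iv_{i+1}$). $\mathbf{X}_n$ is invariant under $D_{2n}$. For $d\mid 2n$, $\mathrm{orb}_d(n)$ denotes the number of $D_{2n}$-orbits of $\mathbf{X}_n$ of cardinality $2n/d$ (equivalently, whose elements have stabilizer of order $d$). *)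

theory Defs
  imports Main
begin

text \<open>Vertices v_0..v_{n-1} are represented by the naturals 0..<n (indices mod n).\<close>

definition Xn :: "nat \<Rightarrow> nat set set" where
  "Xn n = {X. X \<subseteq> {..<n}
     \<and> (\<forall>i<n. \<not> (i \<in> X \<and> (i + 1) mod n \<in> X))
     \<and> (\<forall>i<n. i \<in> X \<or> (i + 1) mod n \<in> X \<or> (i + 2) mod n \<in> X)}"

text \<open>The dihedral group D_{2n} as the 2n abstract elements (k, b), k < n:
  (k, False) is sigma^k, (k, True) is sigma^k tau, which maps v_i to v_{k-i}.\<close>

definition dih :: "nat \<Rightarrow> (nat \<times> bool) set" where
  "dih n = {..<n} \<times> UNIV"

definition dih_act :: "nat \<Rightarrow> nat \<times> bool \<Rightarrow> nat set \<Rightarrow> nat set" where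
  "dih_act n g X = (\<lambda>i. if snd g then (fst g + n - i) mod n else (i + fst g) mod n) ` X"

definition dih_orbit :: "nat \<Rightarrow> nat set \<Rightarrow> nat set set" where
  "dih_orbit n X = (\<lambda>g. dih_act n g X) ` dih n"

definition orbits :: "nat \<Rightarrow> nat set set set" where
  "orbits n = dih_orbit n ` Xn n"

definition orb :: "nat \<Rightarrow> nat \<Rightarrow> nat" where
  "orb d n = card {Y \<in> orbits n. card Y = 2 * n div d}"

end

theory Submission
  imports Defs
begin

lemma modint: "(x::nat) mod n = y mod n \<longleftrightarrow> int x mod int n = int y mod int n"
  by (metis of_nat_eq_iff of_nat_mod)
lemma idiff: "(y::nat) < n \<Longrightarrow> int (x + n - y) = int x + int n - int y" by simp

lemma c1: "(k::nat) < n \<Longrightarrow> l < n \<Longrightarrow> i < n \<Longrightarrow> ((l+n-i) mod n + k) mod n = ((k+l) mod n + n - i) mod n"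
  unfolding modint by (simp add: idiff of_nat_mod mod_simps diff_add_eq[symmetric] add_diff_eq[symmetric]) (simp_all add: mod_eq_dvd_iff algebra_simps)
lemma c2: "(k::nat) < n \<Longrightarrow> l < n \<Longrightarrow> i < n \<Longrightarrow> (k + n - (i+l) mod n) mod n = ((k+n-l) mod n + n - i) mod n"
  unfolding modint by (simp add: idiff of_nat_mod mod_simps diff_add_eq[symmetric] add_diff_eq[symmetric]) (simp_all add: mod_eq_dvd_iff algebra_simps)
lemma c3: "(k::nat) < n \<Longrightarrow> l < n \<Longrightarrow> i < n \<Longrightarrow> (k + n - (l + n - i) mod n) mod n = (i + (k + n - l) mod n) mod n"
  unfolding modint by (simp add: idiff of_nat_mod mod_simps diff_add_eq[symmetric] add_diff_eq[symmetric]) (simp_all add: mod_eq_dvd_iff algebra_simps)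

lemma c0: "((i+l) mod n + k) mod n = (i + (k+l) mod n) mod (n::nat)"
proof -
  have "((i+l) mod n + k) mod n = (i+l+k) mod n" by (simp add: mod_add_left_eq)
  moreover have "(i + (k+l) mod n) mod n = (i+(k+l)) mod n" by (simp add: mod_add_right_eq)
  moreover have "i+l+k = i+(k+l)" by simp
  ultimately show ?thesis by simp
qed

definition phi :: "nat \<Rightarrow> nat \<times> bool \<Rightarrow> nat \<Rightarrow> nat" where
  "phi n g i = (if snd g then (fst g + n - i) mod n else (i + fst g) mod n)"

lemma act_phi: "dih_act n g X = phi n g ` X"
  unfolding dih_act_def phi_def by simp

definition dmul :: "nat \<Rightarrow> nat \<times> bool \<Rightarrow> nat \<times> bool \<Rightarrow> nat \<times> bool" where
  "dmul n g h = ((if snd g then (fst g + n - fst h) mod n else (fst g + fst h) mod n), snd g \<noteq> snd h)"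

definition dinv :: "nat \<Rightarrow> nat \<times> bool \<Rightarrow> nat \<times> bool" where
  "dinv n g = (if snd g then g else ((n - fst g) mod n, False))"

lemma dih_mem: "g \<in> dih n \<longleftrightarrow> fst g < n" by (cases g) (auto simp: dih_def)

lemma phi_lt: "0 < n \<Longrightarrow> phi n g i < n" by (simp add: phi_def)

lemma phi_comp:
  assumes "0<n" "g \<in> dih n" "h \<in> dih n" "i < n"
  shows "phi n g (phi n h i) = phi n (dmul n g h) i"
proof -
  obtain k b where g: "g = (k,b)" by (cases g)
  obtain l c where h: "h = (l,c)" by (cases h)
  have k: "k<n" and l: "l<n" using assms g h by (auto simp: dih_mem)
  show ?thesis
  proof (cases b)
    case True
    then show ?thesis
    proof (cases c)
      case True
      then show ?thesis using c3[OF k l assms(4)] \<open>b\<close> by (simp add: phi_def dmul_def g h)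
    next
      case False
      then show ?thesis using c2[OF k l assms(4)] \<open>b\<close> by (simp add: phi_def dmul_def g h)
    qed
  next
    case False
    then show ?thesis
    proof (cases c)
      case True
      then show ?thesis using c1[OF k l assms(4)] \<open>\<not>b\<close> by (simp add: phi_def dmul_def g h)
    next
      case False
      then show ?thesis using \<open>\<not>b\<close> using c0[of i l n k] by (simp add: phi_def dmul_def g h)
    qed
  qed
qed

lemma dmul_in: "0 < n \<Longrightarrow> dmul n g h \<in> dih n" by (simp add: dih_mem dmul_def)
lemma dinv_in: "0 < n \<Longrightarrow> g \<in> dih n \<Longrightarrow> dinv n g \<in> dih n" by (auto simp: dih_mem dinv_def)

lemma dmul_dinv1: "0 < n \<Longrightarrow> g \<in> dih n \<Longrightarrow> dmul n (dinv n g) g = (0, False)"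
  by (cases "fst g = 0") (auto simp: dih_mem dinv_def dmul_def mod_simps)
lemma dmul_dinv2: "0 < n \<Longrightarrow> g \<in> dih n \<Longrightarrow> dmul n g (dinv n g) = (0, False)"
  by (cases "fst g = 0") (auto simp: dih_mem dinv_def dmul_def mod_simps)

lemma phi_id: "i < n \<Longrightarrow> phi n (0, False) i = i" by (simp add: phi_def)

lemma phi_inv1: "0<n \<Longrightarrow> g \<in> dih n \<Longrightarrow> i < n \<Longrightarrow> phi n (dinv n g) (phi n g i) = i"
  by (simp add: phi_comp dinv_in dmul_dinv1 phi_id)
lemma phi_inv2: "0<n \<Longrightarrow> g \<in> dih n \<Longrightarrow> i < n \<Longrightarrow> phi n g (phi n (dinv n g) i) = i"
  by (simp add: phi_comp dinv_in dmul_dinv2 phi_id)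

lemma phi_inj: "0<n \<Longrightarrow> g \<in> dih n \<Longrightarrow> i < n \<Longrightarrow> j < n \<Longrightarrow> phi n g i = phi n g j \<Longrightarrow> i = j"
  by (metis phi_inv1)

lemma phi_0: "fst h < n \<Longrightarrow> phi n h 0 = fst h" by (simp add: phi_def)

lemma dmul_cancel:
  assumes "0<n" "g \<in> dih n" "h \<in> dih n" "h' \<in> dih n" "dmul n g h = dmul n g h'"
  shows "h = h'"
proof -
  have "phi n g (phi n h 0) = phi n (dmul n g h) 0" by (rule phi_comp) (use assms in auto)
  also have "\<dots> = phi n (dmul n g h') 0" using assms(5) by simp
  also have "\<dots> = phi n g (phi n h' 0)" by (rule phi_comp[symmetric]) (use assms in auto)
  finally have "phi n h 0 = phi n h' 0" by (rule phi_inj[OF assms(1,2) phi_lt[OF assms(1)] phi_lt[OF assms(1)]])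
  then have "fst h = fst h'" using assms by (simp add: phi_0 dih_mem)
  moreover have "snd h = snd h'" using assms(5) by (auto simp: dmul_def)
  ultimately show ?thesis by (simp add: prod_eq_iff)
qed

lemma act_comp:
  assumes "0<n" "g \<in> dih n" "h \<in> dih n" "X \<subseteq> {..<n}"
  shows "dih_act n g (dih_act n h X) = dih_act n (dmul n g h) X"
  unfolding act_phi image_image
proof (rule image_cong[OF refl])
  fix x assume "x \<in> X"
  then have "x < n" using assms(4) by auto
  then show "phi n g (phi n h x) = phi n (dmul n g h) x" using phi_comp[OF assms(1,2,3)] by simp
qed

lemma act_id: "X \<subseteq> {..<n} \<Longrightarrow> dih_act n (0, False) X = X"
proof -
  assume X: "X \<subseteq> {..<n}"
  have "phi n (0, False) ` X = (\<lambda>i. i) ` X"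
    by (rule image_cong[OF refl]) (use X phi_id in auto)
  then show ?thesis unfolding act_phi by simp
qed

lemma act_sub: "0 < n \<Longrightarrow> dih_act n g X \<subseteq> {..<n}"
  unfolding act_phi by (auto simp: phi_lt)

lemma act_fix:
  assumes "0<n" "g \<in> dih n" "X \<subseteq> {..<n}"
  shows "dih_act n g X = X \<longleftrightarrow> (\<forall>i<n. i \<in> X \<longleftrightarrow> phi n g i \<in> X)"
proof
  assume eq: "dih_act n g X = X"
  show "\<forall>i<n. i \<in> X \<longleftrightarrow> phi n g i \<in> X"
  proof (intro allI impI iffI)
    fix i assume "i < n" "i \<in> X"
    then show "phi n g i \<in> X" using eq unfolding act_phi by blast
  next
    fix i assume i: "i < n" "phi n g i \<in> X"
    then obtain j where "j \<in> X" "phi n g i = phi n g j" using eq unfolding act_phi by (metis imageE)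
    then show "i \<in> X" using phi_inj[OF assms(1,2) i(1), of j] assms(3) by auto
  qed
next
  assume H: "\<forall>i<n. i \<in> X \<longleftrightarrow> phi n g i \<in> X"
  show "dih_act n g X = X" unfolding act_phi
  proof
    show "phi n g ` X \<subseteq> X" using H assms(3) by auto
    show "X \<subseteq> phi n g ` X"
    proof
      fix j assume j: "j \<in> X"
      then have jn: "j < n" using assms(3) by auto
      define i where "i = phi n (dinv n g) j"
      have "i < n" using assms(1) by (simp add: i_def phi_lt)
      moreover have "phi n g i = j" using phi_inv2[OF assms(1,2) jn] by (simp add: i_def)
      ultimately show "j \<in> phi n g ` X" using H j by (metis imageI)
    qed
  qed
qed


lemma act_mul_fix:
  assumes "0<n" "g \<in> dih n" "h \<in> dih n" "X \<subseteq> {..<n}" "dih_act n h X = X"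
  shows "dih_act n (dmul n g h) X = dih_act n g X"
  using act_comp[OF assms(1-4)] assms(5) by simp

definition stab :: "nat \<Rightarrow> nat set \<Rightarrow> (nat \<times> bool) set" where
  "stab n X = {g \<in> dih n. dih_act n g X = X}"

lemma finite_dih: "finite (dih n)" by (simp add: dih_def)
lemma card_dih: "card (dih n) = 2 * n" by (simp add: dih_def card_cartesian_product)

lemma fiber_card:
  assumes "0<n" "X \<subseteq> {..<n}" "g0 \<in> dih n"
  shows "card {g \<in> dih n. dih_act n g X = dih_act n g0 X} = card (stab n X)"
    (is "card ?F = card ?S")
proof (rule antisym)
  have "inj_on (dmul n g0) ?S"
    using dmul_cancel[OF assms(1,3)] by (auto simp: stab_def inj_on_def)
  moreover have "dmul n g0 ` ?S \<subseteq> ?F"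
  proof
    fix x assume "x \<in> dmul n g0 ` ?S"
    then obtain h where h: "h \<in> dih n" "dih_act n h X = X" "x = dmul n g0 h"
      by (auto simp: stab_def)
    have "dih_act n x X = dih_act n g0 X"
      unfolding h(3) by (rule act_mul_fix[OF assms(1,3) h(1) assms(2) h(2)])
    then show "x \<in> ?F" using assms(1) by (simp add: h(3) dmul_in)
  qed
  moreover have "finite ?F" using finite_dih by simp
  ultimately show "card ?S \<le> card ?F"
    by (rule card_inj_on_le)
next
  have "inj_on (dmul n (dinv n g0)) ?F"
    using dmul_cancel[OF assms(1) dinv_in[OF assms(1,3)]] by (auto simp: inj_on_def)
  moreover have "dmul n (dinv n g0) ` ?F \<subseteq> ?S"
  proof
    fix x assume "x \<in> dmul n (dinv n g0) ` ?F"
    then obtain g where g: "g \<in> dih n" "dih_act n g X = dih_act n g0 X" and x: "x = dmul n (dinv n g0) g"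
      by auto
    have "dih_act n x X = dih_act n (dinv n g0) (dih_act n g X)"
      unfolding x by (rule act_comp[symmetric, OF assms(1) dinv_in[OF assms(1,3)] g(1) assms(2)])
    also have "\<dots> = dih_act n (dinv n g0) (dih_act n g0 X)" using g(2) by simp
    also have "\<dots> = dih_act n (dmul n (dinv n g0) g0) X"
      by (rule act_comp[OF assms(1) dinv_in[OF assms(1,3)] assms(3) assms(2)])
    also have "\<dots> = X" using assms by (simp add: dmul_dinv1 act_id)
    finally show "x \<in> ?S" using assms by (simp add: stab_def x dmul_in)
  qed
  moreover have "finite ?S" using finite_dih by (simp add: stab_def)
  ultimately show "card ?F \<le> card ?S"
    by (rule card_inj_on_le)
qed

lemma orbit_stab:
  assumes "0<n" "X \<subseteq> {..<n}"
  shows "card (dih_orbit n X) * card (stab n X) = 2 * n"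
proof -
  let ?F = "\<lambda>Y. {g \<in> dih n. dih_act n g X = Y}"
  have eq: "dih n = (\<Union>Y\<in>dih_orbit n X. ?F Y)" by (auto simp: dih_orbit_def)
  have fo: "finite (dih_orbit n X)" by (simp add: dih_orbit_def finite_dih)
  have "card (dih n) = (\<Sum>Y\<in>dih_orbit n X. card (?F Y))"
    by (subst eq, rule card_UN_disjoint) (auto simp: fo finite_dih)
  also have "\<dots> = (\<Sum>Y\<in>dih_orbit n X. card (stab n X))"
    by (rule sum.cong) (auto simp: dih_orbit_def fiber_card[OF assms])
  finally show ?thesis by (simp add: card_dih)
qed

definition per :: "nat \<Rightarrow> nat set \<Rightarrow> nat \<Rightarrow> bool" where
  "per n X k = (\<forall>i<n. i \<in> X \<longleftrightarrow> (i + k) mod n \<in> X)"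

lemma per_n: "per n X n" by (simp add: per_def)
lemma per_0: "per n X 0" by (simp add: per_def)
lemma per_add: assumes "0<n" "per n X a" "per n X b" shows "per n X (a + b)"
  unfolding per_def
proof (intro allI impI)
  fix i assume i: "i < n"
  have lt: "(i + a) mod n < n" using assms by simp
  have h1: "i \<in> X \<longleftrightarrow> (i + a) mod n \<in> X" using assms(2) i unfolding per_def by blast
  have h2: "(i + a) mod n \<in> X \<longleftrightarrow> ((i + a) mod n + b) mod n \<in> X"
    using assms(3) lt unfolding per_def by blast
  have h3: "((i + a) mod n + b) mod n = (i + (a + b)) mod n" by (simp only: mod_add_left_eq add.assoc)
  show "i \<in> X \<longleftrightarrow> (i + (a + b)) mod n \<in> X" using h1 h2 h3 by metis
qed
lemma per_mult: assumes "0<n" "per n X a" shows "per n X (a * q)"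
proof (induction q)
  case 0 then show ?case by (simp add: per_0)
next
  case (Suc q)
  then have "per n X (a + a * q)" using per_add[OF assms(1,2)] by blast
  then show ?case by (simp add: add.commute)
qed
lemma per_sub: assumes "0<n" "per n X a" "per n X (a + b)" shows "per n X b"
  unfolding per_def
proof (intro allI impI)
  fix i assume i: "i < n"
  have lt: "(i + b) mod n < n" using assms by simp
  have h1: "(i + b) mod n \<in> X \<longleftrightarrow> ((i + b) mod n + a) mod n \<in> X"
    using assms(2) lt unfolding per_def by blast
  have h2: "i \<in> X \<longleftrightarrow> (i + (a + b)) mod n \<in> X" using assms(3) i unfolding per_def by blast
  have "i + b + a = i + (a + b)" by simp
  then have h3: "((i + b) mod n + a) mod n = (i + (a + b)) mod n" by (simp only: mod_add_left_eq)
  show "i \<in> X \<longleftrightarrow> (i + b) mod n \<in> X" using h1 h2 h3 by metis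
qed

lemma per_struct:
  assumes "0<n"
  shows "\<exists>r. 0 < r \<and> r dvd n \<and> (\<forall>k. per n X k \<longleftrightarrow> r dvd k)"
proof -
  define r where "r = (LEAST k. 0 < k \<and> per n X k)"
  have ex: "0 < n \<and> per n X n" using assms per_n by simp
  have r: "0 < r \<and> per n X r" unfolding r_def by (rule LeastI[of _ n], rule ex)
  have rmin: "\<And>k. 0 < k \<Longrightarrow> per n X k \<Longrightarrow> r \<le> k" unfolding r_def by (simp add: Least_le)
  have iff: "per n X k \<longleftrightarrow> r dvd k" for k
  proof
    assume pk: "per n X k"
    have p1: "per n X (r * (k div r))" using per_mult[OF assms] r by blast
    have "r * (k div r) + k mod r = k" by simp
    then have p2: "per n X (r * (k div r) + k mod r)" using pk by simp
    have "per n X (k mod r)" by (rule per_sub[OF assms p1 p2])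
    moreover have "k mod r < r" using r by simp
    ultimately have "k mod r = 0" using rmin by (meson leD not_gr_zero)
    then show "r dvd k" by (simp add: dvd_eq_mod_eq_0)
  next
    assume "r dvd k"
    then obtain q where "k = r * q" by (auto elim: dvdE)
    then show "per n X k" using per_mult[OF assms] r by blast
  qed
  show ?thesis using r iff per_n by blast
qed

lemma card_dvd_set:
  assumes "0 < r" "r dvd n"
  shows "card {k. k < n \<and> r dvd k} = n div r"
proof -
  have "{k. k < n \<and> r dvd k} = (\<lambda>j. r * j) ` {..<n div r}"
  proof (intro set_eqI iffI)
    fix k assume "k \<in> {k. k < n \<and> r dvd k}"
    then obtain j where "k = r * j" "r * j < n" by (auto elim: dvdE)
    moreover then have "j < n div r" using assms
      by (metis dvd_mult_div_cancel mult_less_cancel1)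
    ultimately show "k \<in> (\<lambda>j. r * j) ` {..<n div r}" by auto
  next
    fix k assume "k \<in> (\<lambda>j. r * j) ` {..<n div r}"
    then obtain j where "k = r * j" "j < n div r" by auto
    moreover then have "r * j < n" using assms
      by (metis dvd_mult_div_cancel mult_less_cancel1)
    ultimately show "k \<in> {k. k < n \<and> r dvd k}" by auto
  qed
  moreover have "inj_on (\<lambda>j. r * j) {..<n div r}" using assms by (auto simp: inj_on_def)
  ultimately show ?thesis by (simp add: card_image)
qed

lemma snd_dmul: "snd (dmul n g h) = (snd g \<noteq> snd h)" by (simp add: dmul_def)

lemma per_act:
  assumes "0<n" "k < n" "X \<subseteq> {..<n}"
  shows "dih_act n (k, False) X = X \<longleftrightarrow> per n X k"
proof -
  have "(k, False) \<in> dih n" using assms by (simp add: dih_mem)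
  from act_fix[OF assms(1) this assms(3)] show ?thesis by (simp add: per_def phi_def)
qed

lemma stab_card:
  assumes "0<n" "X \<subseteq> {..<n}"
  shows "\<exists>r. 0 < r \<and> r dvd n \<and> (\<forall>k. per n X k \<longleftrightarrow> r dvd k) \<and>
     (card (stab n X) = n div r \<or> card (stab n X) = 2 * (n div r))"
proof -
  obtain r where r: "0 < r" "r dvd n" "\<forall>k. per n X k \<longleftrightarrow> r dvd k" using per_struct[OF assms(1)] by blast
  let ?SR = "{g \<in> stab n X. \<not> snd g}"
  let ?ST = "{g \<in> stab n X. snd g}"
  have fin: "finite (stab n X)" by (simp add: stab_def finite_dih)
  have un: "stab n X = ?SR \<union> ?ST" by auto
  have cs: "card (stab n X) = card ?SR + card ?ST"
    by (subst un, rule card_Un_disjoint) (use fin in auto)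
  have SR: "?SR = (\<lambda>k. (k, False)) ` {k. k < n \<and> per n X k}"
  proof (intro set_eqI iffI)
    fix g assume g: "g \<in> ?SR"
    then obtain k where gk: "g = (k, False)" by (cases g) auto
    have "k < n" using g gk by (auto simp: stab_def dih_mem)
    moreover have "per n X k" using g gk per_act[OF assms(1) `k < n` assms(2)]
      by (simp add: stab_def)
    ultimately show "g \<in> (\<lambda>k. (k, False)) ` {k. k < n \<and> per n X k}" using gk by auto
  next
    fix g assume "g \<in> (\<lambda>k. (k, False)) ` {k. k < n \<and> per n X k}"
    then obtain k where gk: "g = (k, False)" "k < n" "per n X k" by auto
    then have "g \<in> dih n" by (simp add: dih_mem)
    then show "g \<in> ?SR" using gk per_act[OF assms(1) gk(2) assms(2)]
      by (simp add: stab_def)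
  qed
  have cSR: "card ?SR = n div r"
    unfolding SR using r card_dvd_set[OF r(1,2)] by (simp add: card_image inj_on_def)
  have "card ?ST = 0 \<or> card ?ST = card ?SR"
  proof (cases "?ST = {}")
    case True
    then have "card ?ST = 0" by (simp only: card.empty)
    then show ?thesis by blast
  next
    case False
    then obtain t where t: "t \<in> stab n X" "snd t" by auto
    have td: "t \<in> dih n" and tX: "dih_act n t X = X" using t by (auto simp: stab_def)
    have "inj_on (dmul n t) (stab n X)"
      using dmul_cancel[OF assms(1) td] by (auto simp: stab_def inj_on_def)
    then have inj1: "inj_on (dmul n t) ?SR" and inj2: "inj_on (dmul n t) ?ST"
      by (auto intro: inj_on_subset)
    have im: "dmul n t h \<in> stab n X" if "h \<in> stab n X" for h
      using that assms td tX act_mul_fix[OF assms(1) td _ assms(2)] by (auto simp: stab_def dmul_in)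
    have "dmul n t ` ?SR \<subseteq> ?ST" using im t by (auto simp: snd_dmul)
    then have 1: "card ?SR \<le> card ?ST" using inj1 fin
      by (metis (no_types, lifting) card_inj_on_le finite_subset mem_Collect_eq subsetI)
    have "dmul n t ` ?ST \<subseteq> ?SR" using im t by (auto simp: snd_dmul)
    then have 2: "card ?ST \<le> card ?SR" using inj2 fin
      by (metis (no_types, lifting) card_inj_on_le finite_subset mem_Collect_eq subsetI)
    show ?thesis using 1 2 by simp
  qed
  then show ?thesis using cs cSR r by auto
qed


definition lift :: "nat \<Rightarrow> nat \<Rightarrow> nat set \<Rightarrow> nat set" where
  "lift n m A = {i. i < n \<and> i mod m \<in> A}"

lemma phi_mod:
  assumes "0<m" "m dvd n" "fst g < n" "i < n"
  shows "phi n g i mod m = phi m (fst g mod m, snd g) (i mod m)"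
proof (cases "snd g")
  case False
  then show ?thesis using assms(2)
    by (simp add: phi_def mod_mod_cancel mod_add_eq)
next
  case True
  obtain p where np: "n = m * p" using assms(2) by (auto elim: dvdE)
  have im: "i mod m < m" using assms by simp
  have "(fst g + n - i) mod m = (fst g mod m + m - i mod m) mod m"
  proof -
    let ?k = "fst g"
    have e1: "int (?k + n - i) = (int ?k - int i) + int p * int m" using assms(4) np by (simp add: of_nat_diff)
    have e2: "int (?k mod m + m - i mod m) = int ?k mod int m - int i mod int m + 1 * int m"
      using im by (simp add: of_nat_diff of_nat_mod)
    have "(int ?k - int i) mod int m = (int ?k mod int m - int i mod int m) mod int m" by (simp add: mod_diff_eq)
    then show ?thesis unfolding modint e1 e2 mod_mult_self1 by simp
  qed
  then show ?thesis using True assms(2) by (simp add: phi_def mod_mod_cancel)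
qed

lemma lift_act:
  assumes "0<m" "0<n" "m dvd n" "g \<in> dih n" "A \<subseteq> {..<m}"
  shows "dih_act n g (lift n m A) = lift n m (dih_act m (fst g mod m, snd g) A)"
proof (intro set_eqI iffI)
  have g: "fst g < n" using assms(4) by (simp add: dih_mem)
  fix x assume "x \<in> dih_act n g (lift n m A)"
  then obtain i where i: "i < n" "i mod m \<in> A" "x = phi n g i" by (auto simp: act_phi lift_def)
  have "x < n" using i assms(2) by (simp add: phi_lt)
  moreover have "x mod m = phi m (fst g mod m, snd g) (i mod m)"
    using phi_mod[OF assms(1,3) g i(1)] i(3) by simp
  ultimately show "x \<in> lift n m (dih_act m (fst g mod m, snd g) A)"
    using i(2) by (auto simp: act_phi lift_def)
next
  have g: "fst g < n" using assms(4) by (simp add: dih_mem)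
  let ?g' = "(fst g mod m, snd g)"
  have g': "?g' \<in> dih m" using assms(1) by (simp add: dih_mem)
  fix x assume "x \<in> lift n m (dih_act m ?g' A)"
  then obtain a where x: "x < n" "a \<in> A" "x mod m = phi m ?g' a" by (auto simp: act_phi lift_def)
  define i where "i = phi n (dinv n g) x"
  have i: "i < n" using assms(2) by (simp add: i_def phi_lt)
  have xi: "phi n g i = x" unfolding i_def by (rule phi_inv2[OF assms(2,4) x(1)])
  have "phi m ?g' (i mod m) = phi m ?g' a"
    using phi_mod[OF assms(1,3) g i] xi x(3) by simp
  then have "i mod m = a"
    using phi_inj[OF assms(1) g'] x(2) assms(5) assms(1) by auto
  then have "i \<in> lift n m A" using i x(2) by (simp add: lift_def)
  then show "x \<in> dih_act n g (lift n m A)" using xi by (auto simp: act_phi)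
qed

lemma orbit_lift:
  assumes "0<m" "0<n" "m dvd n" "A \<subseteq> {..<m}"
  shows "dih_orbit n (lift n m A) = lift n m ` dih_orbit m A"
proof (intro set_eqI iffI)
  fix Y assume "Y \<in> dih_orbit n (lift n m A)"
  then obtain g where g: "g \<in> dih n" "Y = dih_act n g (lift n m A)" by (auto simp: dih_orbit_def)
  have "(fst g mod m, snd g) \<in> dih m" using assms(1) by (simp add: dih_mem)
  then show "Y \<in> lift n m ` dih_orbit m A"
    using g lift_act[OF assms(1,2,3) g(1) assms(4)] by (auto simp: dih_orbit_def)
next
  fix Y assume "Y \<in> lift n m ` dih_orbit m A"
  then obtain g where g: "g \<in> dih m" "Y = lift n m (dih_act m g A)" by (auto simp: dih_orbit_def)
  have "m \<le> n" using assms by (simp add: dvd_imp_le)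
  then have gn: "g \<in> dih n" using g(1) by (simp add: dih_mem)
  have "(fst g mod m, snd g) = g" using g(1) by (simp add: dih_mem prod_eq_iff)
  then have "Y = dih_act n g (lift n m A)"
    using g(2) lift_act[OF assms(1,2,3) gn assms(4)] by simp
  then show "Y \<in> dih_orbit n (lift n m A)" using gn by (auto simp: dih_orbit_def)
qed

lemma lift_inj:
  assumes "m \<le> n"
  shows "inj_on (lift n m) (Pow {..<m})"
proof (rule inj_onI)
  fix A B assume A: "A \<in> Pow {..<m}" and B: "B \<in> Pow {..<m}" and eq: "lift n m A = lift n m B"
  have "j \<in> A \<longleftrightarrow> j \<in> B" if "j < m" for j
  proof -
    have "j \<in> A \<longleftrightarrow> j \<in> lift n m A" using that assms by (simp add: lift_def)
    also have "\<dots> \<longleftrightarrow> j \<in> lift n m B" using eq by simp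
    also have "\<dots> \<longleftrightarrow> j \<in> B" using that assms by (simp add: lift_def)
    finally show ?thesis .
  qed
  then show "A = B" using A B by blast
qed

lemma forall_mod:
  fixes m n :: nat
  assumes "0<m" "m \<le> n"
  shows "(\<forall>i<n. P (i mod m)) \<longleftrightarrow> (\<forall>j<m. P j)"
proof
  assume H: "\<forall>i<n. P (i mod m)"
  show "\<forall>j<m. P j"
  proof (intro allI impI)
    fix j assume "j < m"
    moreover have "j < n" using \<open>j < m\<close> assms(2) by simp
    ultimately show "P j" using H[rule_format, of j] by simp
  qed
next
  assume "\<forall>j<m. P j"
  then show "\<forall>i<n. P (i mod m)" using assms by simp
qed

lemma Xn_lift:
  assumes "0<m" "m dvd n" "A \<subseteq> {..<m}" "0 < n"
  shows "lift n m A \<in> Xn n \<longleftrightarrow> A \<in> Xn m"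
proof -
  have mn: "m \<le> n" and n: "0 < n" using assms by (auto simp: dvd_imp_le)
  let ?L = "lift n m A"
  have mem: "x \<in> ?L \<longleftrightarrow> x < n \<and> x mod m \<in> A" for x by (simp add: lift_def)
  have k: "(i + c) mod n mod m = (i mod m + c) mod m" for i c
    using assms(2) by (simp add: mod_mod_cancel mod_add_left_eq)
  have lt: "(i + c) mod n < n" for i c using n by simp
  have k1: "Suc i mod n mod m = Suc (i mod m) mod m" for i using k[of i 1] by simp
  have k2: "Suc (Suc i) mod n mod m = Suc (Suc (i mod m)) mod m" for i using k[of i 2] by simp
  have k3: "Suc (Suc i mod m) mod m = Suc (Suc (i mod m)) mod m" for i by (metis mod_Suc_eq)
  have a: "(\<forall>i<n. \<not> (i \<in> ?L \<and> (i + 1) mod n \<in> ?L)) \<longleftrightarrow>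
        (\<forall>j<m. \<not> (j \<in> A \<and> (j + 1) mod m \<in> A))"
  proof -
    have "(\<forall>i<n. \<not> (i \<in> ?L \<and> (i + 1) mod n \<in> ?L)) \<longleftrightarrow>
        (\<forall>i<n. (\<lambda>j. \<not> (j \<in> A \<and> (j + 1) mod m \<in> A)) (i mod m))"
      by (simp add: mem k k1 k2 k3 lt)
    also have "\<dots> \<longleftrightarrow> (\<forall>j<m. \<not> (j \<in> A \<and> (j + 1) mod m \<in> A))"
      by (rule forall_mod[OF assms(1) mn])
    finally show ?thesis .
  qed
  have b: "(\<forall>i<n. i \<in> ?L \<or> (i + 1) mod n \<in> ?L \<or> (i + 2) mod n \<in> ?L) \<longleftrightarrow>
        (\<forall>j<m. j \<in> A \<or> (j + 1) mod m \<in> A \<or> (j + 2) mod m \<in> A)"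
  proof -
    have "(\<forall>i<n. i \<in> ?L \<or> (i + 1) mod n \<in> ?L \<or> (i + 2) mod n \<in> ?L) \<longleftrightarrow>
        (\<forall>i<n. (\<lambda>j. j \<in> A \<or> (j + 1) mod m \<in> A \<or> (j + 2) mod m \<in> A) (i mod m))"
      by (simp add: mem k k1 k2 k3 lt)
    also have "\<dots> \<longleftrightarrow> (\<forall>j<m. j \<in> A \<or> (j + 1) mod m \<in> A \<or> (j + 2) mod m \<in> A)"
      by (rule forall_mod[OF assms(1) mn])
    finally show ?thesis .
  qed
  have "?L \<subseteq> {..<n}" by (auto simp: lift_def)
  then show ?thesis using a b assms(3) unfolding Xn_def by blast
qed

lemma per_lift:
  assumes "0<m" "m dvd n" "per n X m" "X \<subseteq> {..<n}" "0 < n"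
  shows "X = lift n m (X \<inter> {..<m})"
proof -
  have mn: "m \<le> n" and n: "0 < n" using assms by (auto simp: dvd_imp_le)
  have "i \<in> X \<longleftrightarrow> i mod m \<in> X" if i: "i < n" for i
  proof -
    have p: "per n X (m * (i div m))" using per_mult[OF n assms(3)] by blast
    have j: "i mod m < n" using assms(1) mn by (meson mod_less_divisor order_less_le_trans)
    have "i mod m + m * (i div m) = i" by simp
    then have "(i mod m + m * (i div m)) mod n = i" using i by simp
    then show ?thesis using p j unfolding per_def by metis
  qed
  then show ?thesis using assms(1,4) by (auto simp: lift_def)
qed

lemma periodic:
  assumes "0<n" "0<m" "m dvd n" "X \<subseteq> {..<n}" "card (dih_orbit n X) = c"
    and c: "(c = 2 * m \<and> odd (n div m)) \<or> c = m"
  shows "per n X m"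
proof -
  obtain r where r: "0 < r" "r dvd n" "\<forall>k. per n X k \<longleftrightarrow> r dvd k"
    and s: "card (stab n X) = n div r \<or> card (stab n X) = 2 * (n div r)"
    using stab_card[OF assms(1,4)] by blast
  define s where "s = card (stab n X)"
  define p where "p = n div m"
  define q where "q = n div r"
  have np: "n = m * p" using assms(3) by (simp add: p_def)
  have nq: "n = r * q" using r(2) by (simp add: q_def)
  have p0: "0 < p" using np assms(1) by (auto intro: Nat.gr0I)
  have cs: "c * s = 2 * n" using orbit_stab[OF assms(1,4)] assms(5) by (simp add: s_def)
  have sq: "s = q \<or> s = 2 * q" using s by (simp add: s_def q_def)
  have "r dvd m"
    using c
  proof
    assume A: "c = 2 * m \<and> odd (n div m)"
    then have "m * (2 * s) = m * (2 * p)" using cs np by (simp add: ac_simps)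
    then have sp: "s = p" using assms(2) by simp
    have "s = q" using sq sp A p_def by auto
    then have "m * p = r * p" using np nq sp by metis
    then have "m = r" using p0 by simp
    then show ?thesis by simp
  next
    assume B: "c = m"
    then have "m * s = m * (2 * p)" using cs np by (simp add: ac_simps)
    then have sp: "s = 2 * p" using assms(2) by simp
    show ?thesis using sq
    proof
      assume "s = q"
      then have "(2 * r) * p = m * p" using np nq sp by (metis mult.assoc mult.commute)
      then have "m = 2 * r" using p0 by simp
      then show ?thesis by simp
    next
      assume "s = 2 * q"
      then have "q = p" using sp by simp
      then have "m * p = r * p" using np nq by metis
      then have "m = r" using p0 by simp
      then show ?thesis by simp
    qed
  qed
  then show ?thesis using r(3) by blast
qed

lemma main_count:
  assumes "0<m" "0<n" "m dvd n"
    and P: "\<forall>X\<in>Xn n. card (dih_orbit n X) = c \<longrightarrow> per n X m"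
  shows "card {Y \<in> orbits n. card Y = c} = card {Y \<in> orbits m. card Y = c}"
proof -
  let ?A = "{Y \<in> orbits n. card Y = c}"
  let ?B = "{Y \<in> orbits m. card Y = c}"
  let ?f = "\<lambda>Y. lift n m ` Y"
  have mn: "m \<le> n" using assms by (simp add: dvd_imp_le)
  have sub: "Y \<subseteq> Pow {..<m}" if "Y \<in> orbits m" for Y
    using that act_sub[OF assms(1)] by (auto simp: orbits_def dih_orbit_def)
  have inj: "inj_on ?f ?B"
  proof (rule inj_onI)
    fix Y1 Y2 assume "Y1 \<in> ?B" "Y2 \<in> ?B" "?f Y1 = ?f Y2"
    then show "Y1 = Y2" using inj_on_image_eq_iff[OF lift_inj[OF mn]] sub by auto
  qed
  have cardf: "card (?f Y) = card Y" if "Y \<in> orbits m" for Y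
    using card_image[OF inj_on_subset[OF lift_inj[OF mn] sub[OF that]]] .
  have "?f ` ?B = ?A"
  proof (intro set_eqI iffI)
    fix Z assume "Z \<in> ?f ` ?B"
    then obtain Y where Y: "Y \<in> ?B" "Z = ?f Y" by blast
    then obtain X' where X': "X' \<in> Xn m" "Y = dih_orbit m X'" by (auto simp: orbits_def)
    have X'm: "X' \<subseteq> {..<m}" using X'(1) by (simp add: Xn_def)
    have "Z = dih_orbit n (lift n m X')" using Y(2) X'(2) orbit_lift[OF assms(1,2,3) X'm] by simp
    moreover have "lift n m X' \<in> Xn n" using Xn_lift[OF assms(1,3) X'm assms(2)] X'(1) by simp
    ultimately have "Z \<in> orbits n" by (simp add: orbits_def)
    moreover have "card Z = c" using cardf Y by auto
    ultimately show "Z \<in> ?A" by simp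
  next
    fix Z assume Z: "Z \<in> ?A"
    then obtain X where X: "X \<in> Xn n" "Z = dih_orbit n X" by (auto simp: orbits_def)
    have Xn: "X \<subseteq> {..<n}" using X(1) by (simp add: Xn_def)
    have "per n X m" using P X Z by auto
    then have XL: "X = lift n m (X \<inter> {..<m})" using per_lift[OF assms(1,3) _ Xn assms(2)] by blast
    have Xm: "X \<inter> {..<m} \<subseteq> {..<m}" by simp
    have X'm: "X \<inter> {..<m} \<in> Xn m" using Xn_lift[OF assms(1,3) Xm assms(2)] X(1) XL by simp
    let ?Y = "dih_orbit m (X \<inter> {..<m})"
    have ZY: "Z = ?f ?Y" using X(2) XL orbit_lift[OF assms(1,2,3) Xm] by metis
    have Yo: "?Y \<in> orbits m" using X'm by (simp add: orbits_def)
    then have "card ?Y = c" using cardf[OF Yo] ZY Z by simp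
    then have "?Y \<in> ?B" using Yo by simp
    then show "Z \<in> ?f ` ?B" using ZY by blast
  qed
  then have "bij_betw ?f ?B ?A" using inj by (simp add: bij_betw_def)
  then show ?thesis by (simp add: bij_betw_same_card)
qed

theorem proposition2p4:
  fixes n d :: nat
  assumes "n \<ge> 1" and "d dvd 2 * n"
  shows "orb d n = (if odd d then orb 1 (n div d) else orb 2 (2 * n div d))"
proof -
  have n0: "0 < n" using assms(1) by simp
  have d0: "0 < d" using assms n0 by (auto intro: Nat.gr0I)
  show ?thesis
  proof (cases "odd d")
    case True
    have "coprime d 2" using True by simp
    then have dn: "d dvd n" using assms(2) coprime_dvd_mult_right_iff by blast
    define m where "m = n div d"
    have nm: "n = d * m" using dn by (simp add: m_def)
    have m0: "0 < m" using nm n0 by (auto intro: Nat.gr0I)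
    have mn: "m dvd n" using nm by simp
    have c: "2 * n div d = 2 * m" using nm d0 by simp
    have ndm: "n div m = d" using nm m0 by simp
    have P: "\<forall>X\<in>Xn n. card (dih_orbit n X) = 2 * m \<longrightarrow> per n X m"
    proof (intro ballI impI)
      fix X assume "X \<in> Xn n" "card (dih_orbit n X) = 2 * m"
      moreover have "X \<subseteq> {..<n}" using \<open>X \<in> Xn n\<close> by (simp add: Xn_def)
      ultimately show "per n X m" using periodic[OF n0 m0 mn, of X "2 * m"] True ndm by simp
    qed
    have "orb d n = card {Y \<in> orbits n. card Y = 2 * m}" by (simp add: orb_def c)
    also have "\<dots> = card {Y \<in> orbits m. card Y = 2 * m}" by (rule main_count[OF m0 n0 mn P])
    also have "\<dots> = orb 1 (n div d)" by (simp add: orb_def m_def)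
    finally show ?thesis using True by simp
  next
    case False
    then obtain e where de: "d = 2 * e" by (auto elim: evenE)
    have en: "e dvd n" using assms(2) de by simp
    define m where "m = n div e"
    have e0: "0 < e" using d0 de by simp
    have nm: "n = e * m" using en by (simp add: m_def)
    have m0: "0 < m" using nm n0 by (auto intro: Nat.gr0I)
    have mn: "m dvd n" using nm by simp
    have c: "2 * n div d = m" using nm de e0 by simp
    have P: "\<forall>X\<in>Xn n. card (dih_orbit n X) = m \<longrightarrow> per n X m"
    proof (intro ballI impI)
      fix X assume "X \<in> Xn n" "card (dih_orbit n X) = m"
      moreover have "X \<subseteq> {..<n}" using \<open>X \<in> Xn n\<close> by (simp add: Xn_def)
      ultimately show "per n X m" using periodic[OF n0 m0 mn, of X m] by simp
    qed
    have "orb d n = card {Y \<in> orbits n. card Y = m}" by (simp add: orb_def c)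
    also have "\<dots> = card {Y \<in> orbits m. card Y = m}" by (rule main_count[OF m0 n0 mn P])
    also have "\<dots> = orb 2 (2 * n div d)" by (simp add: orb_def c)
    finally show ?thesis using False by simp
  qed
qed

end
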